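(* Let $\alpha>1$, $1<\beta<\alpha$, and let $H:\mathbb{R}\to\mathbb{R}$ be continuous. Let $L^\beta=L^\beta([0,1],\mathcal{B}([0,1]),\mathrm{Leb})$ be equipped with its weak topology and $\mathcal{D}^1$ be the space of real-valued càdlàg functions on $[0,1]$ with the Skorohod topology. Then the mapping $(s,\phi)\in\mathcal{D}^1\times L^\beta\mapsto\int_0^1H(s(t))|\phi(t)|^\alpha\,dt$ is $\mathcal{B}(\mathcal{D}^1\times L^\beta)$-measurable. *)

theory Defs
  imports "HOL-Analysis.Analysis"
begin

definition borel_of_top :: "'a topology \<Rightarrow> 'a measure" where
  "borel_of_top X = sigma (topspace X) {U. openin X U}"

definition Leb01 :: "real measure" where
  "Leb01 = restrict_space lborel {0..1}"

definition cadlag :: "(real \<Rightarrow> real) set" where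
  "cadlag = {s. s \<in> extensional {0..1}
     \<and> (\<forall>t\<in>{0..<1}. (s \<longlongrightarrow> s t) (at_right t))
     \<and> (\<forall>t\<in>{0<..1}. \<exists>l. (s \<longlongrightarrow> l) (at_left t))}"

definition time_changes :: "(real \<Rightarrow> real) set" where
  "time_changes = {r. continuous_on {0..1} r \<and> strict_mono_on {0..1} r
                        \<and> r ` {0..1} = {0..1}}"

definition skorohod_dist :: "(real \<Rightarrow> real) \<Rightarrow> (real \<Rightarrow> real) \<Rightarrow> real" where
  "skorohod_dist x y =
     Inf {max (SUP t\<in>{0..1}. \<bar>r t - t\<bar>) (SUP t\<in>{0..1}. \<bar>x t - y (r t)\<bar>) | r. r \<in> time_changes}"

definition skorohod_topology :: "(real \<Rightarrow> real) topology" where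
  "skorohod_topology = Metric_space.mtopology cadlag skorohod_dist"

text \<open>L^p([0,1], Borel, Leb), represented by (measurable) representatives.\<close>
definition Lp01 :: "real \<Rightarrow> (real \<Rightarrow> real) set" where
  "Lp01 p = {f. f \<in> borel_measurable Leb01 \<and> integrable Leb01 (\<lambda>t. \<bar>f t\<bar> powr p)}"

definition weak_Lp_topology :: "real \<Rightarrow> (real \<Rightarrow> real) topology" where
  "weak_Lp_topology p = topology_generated_by
     {{f \<in> Lp01 p. (\<integral>t. f t * g t \<partial>Leb01) \<in> U} | g U.
         g \<in> Lp01 (p / (p - 1)) \<and> open U}"

end

theory Submission
  imports Defs "HOL-Analysis.Analysis"
begin


lemma space_borel_of_top[simp]: "space (borel_of_top X) = topspace X"
  unfolding borel_of_top_def by (rule space_measure_of) (auto dest: openin_subset)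

lemma sets_borel_of_top: "sets (borel_of_top X) = sigma_sets (topspace X) {U. openin X U}"
  unfolding borel_of_top_def by (rule sets_measure_of) (auto dest: openin_subset)

lemma openin_borel_of_top: "openin X U \<Longrightarrow> U \<in> sets (borel_of_top X)"
  unfolding sets_borel_of_top by auto

lemma continuous_map_borel_of_top:
  assumes "continuous_map X Y f"
  shows "f \<in> borel_of_top X \<rightarrow>\<^sub>M borel_of_top Y"
  unfolding borel_of_top_def[of Y]
proof (rule measurable_measure_of)
  show "{U. openin Y U} \<subseteq> Pow (topspace Y)" by (auto dest: openin_subset)
  show "f \<in> space (borel_of_top X) \<rightarrow> topspace Y"
    using continuous_map_funspace[OF assms] by simp
  fix A assume "A \<in> {U. openin Y U}"
  then have "openin X {x \<in> topspace X. f x \<in> A}"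
    using \<open>A \<in> {U. openin Y U}\<close> by (intro openin_continuous_map_preimage[OF assms]) simp
  moreover have "f -` A \<inter> space (borel_of_top X) = {x \<in> topspace X. f x \<in> A}" by auto
  ultimately show "f -` A \<inter> space (borel_of_top X) \<in> sets (borel_of_top X)"
    by (simp add: openin_borel_of_top)
qed

lemma sets_pair_sub_borel_prod:
  "sets (borel_of_top X \<Otimes>\<^sub>M borel_of_top Y) \<subseteq> sets (borel_of_top (prod_topology X Y))"
proof -
  let ?B = "borel_of_top (prod_topology X Y)"
  have f: "fst \<in> ?B \<rightarrow>\<^sub>M borel_of_top X"
    by (rule continuous_map_borel_of_top) (rule continuous_map_fst)
  have s: "snd \<in> ?B \<rightarrow>\<^sub>M borel_of_top Y"
    by (rule continuous_map_borel_of_top) (rule continuous_map_snd)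
  have ab: "a \<times> b \<in> sets ?B" if "a \<in> sets (borel_of_top X)" "b \<in> sets (borel_of_top Y)" for a b
  proof -
    have "a \<times> b = (fst -` a \<inter> space ?B) \<inter> (snd -` b \<inter> space ?B)"
      using sets.sets_into_space[OF that(1)] sets.sets_into_space[OF that(2)]
      by (auto simp: topspace_prod_topology)
    then show ?thesis using measurable_sets[OF f that(1)] measurable_sets[OF s that(2)] by auto
  qed
  show ?thesis
  proof -
    have sa: "sigma_algebra (space ?B) (sets ?B)" by (rule sets.sigma_algebra_axioms)
    have "sigma_sets (space ?B) {a \<times> b |a b. a \<in> sets (borel_of_top X) \<and> b \<in> sets (borel_of_top Y)} \<subseteq> sets ?B"
      by (rule sigma_algebra.sigma_sets_subset[OF sa]) (use ab in blast)
    then show ?thesis unfolding sets_pair_measure by (simp add: topspace_prod_topology)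
  qed
qed

lemma XXX: "True" by simp

lemma measurable_from_smaller:
  assumes "f \<in> M \<rightarrow>\<^sub>M N" "sets M \<subseteq> sets M'" "space M = space M'"
  shows "f \<in> M' \<rightarrow>\<^sub>M N"
  using assms unfolding measurable_def by auto


lemma tc_in: "r \<in> time_changes \<Longrightarrow> t \<in> {0..1} \<Longrightarrow> r t \<in> {0..1}"
  unfolding time_changes_def by blast

lemma tc_smono: "r \<in> time_changes \<Longrightarrow> a \<in> {0..1} \<Longrightarrow> b \<in> {0..1} \<Longrightarrow> a < b \<Longrightarrow> r a < r b"
  unfolding time_changes_def strict_mono_on_def by blast

lemma tc_inj: "r \<in> time_changes \<Longrightarrow> inj_on r {0..1}"
  unfolding time_changes_def by (auto intro: strict_mono_on_imp_inj_on)

lemma tc_one: assumes r: "r \<in> time_changes" shows "r 1 = 1"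
proof -
  have "1 \<in> r ` {0..1}" using r unfolding time_changes_def by auto
  then obtain s where s: "s \<in> {0..1}" "r s = 1" by auto
  show ?thesis
  proof (cases "s = 1")
    case False
    then have "r s < r 1" using s by (intro tc_smono[OF r]) auto
    then show ?thesis using tc_in[OF r, of 1] s by auto
  qed (use s in auto)
qed

lemma tc_inv:
  assumes r: "r \<in> time_changes"
  defines "g \<equiv> the_inv_into {0..1} r"
  shows "g \<in> time_changes" "\<And>t. t \<in> {0..1} \<Longrightarrow> r (g t) = t"
    "\<And>t. t \<in> {0..1} \<Longrightarrow> g (r t) = t" "\<And>t. t \<in> {0..1} \<Longrightarrow> g t \<in> {0..1}"
proof -
  have inj: "inj_on r {0..1}" by (rule tc_inj[OF r])
  have im: "r ` {0..1} = {0..1}" using r unfolding time_changes_def by blast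
  show rg: "r (g t) = t" if "t \<in> {0..1}" for t
    unfolding g_def using f_the_inv_into_f[OF inj] that im by auto
  show gr: "g (r t) = t" if "t \<in> {0..1}" for t
    unfolding g_def using the_inv_into_f_f[OF inj] that by auto
  show gin: "g t \<in> {0..1}" if "t \<in> {0..1}" for t
    unfolding g_def using the_inv_into_into[OF inj, of t "{0..1}"] that im by auto
  have cont: "continuous_on {0..1} g"
    using continuous_on_inv[of "{0..1}" r g] r gr im unfolding time_changes_def by auto
  have sm: "strict_mono_on {0..1} g"
  proof (rule strict_mono_onI)
    fix a b :: real assume ab: "a \<in> {0..1}" "b \<in> {0..1}" "a < b"
    show "g a < g b"
    proof (rule ccontr)
      assume "\<not> g a < g b"
      then consider "g b < g a" | "g b = g a" by linarith
      then show False
      proof cases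
        case 1
        then have "r (g b) < r (g a)" using gin ab by (intro tc_smono[OF r]) auto
        then show False using rg ab by auto
      next
        case 2 then have "r (g b) = r (g a)" by simp
        then show False using rg ab by auto
      qed
    qed
  qed
  have "g ` {0..1} = {0..1}"
  proof
    show "g ` {0..1} \<subseteq> {0..1}" using gin by auto
    show "{0..1} \<subseteq> g ` {0..1}"
    proof
      fix s :: real assume "s \<in> {0..1}"
      then show "s \<in> g ` {0..1}" using gr[of s] tc_in[OF r, of s] by (metis image_eqI)
    qed
  qed
  then show "g \<in> time_changes" using cont sm unfolding time_changes_def by blast
qed

lemma tc_comp:
  assumes r1: "r1 \<in> time_changes" and r2: "r2 \<in> time_changes"
  shows "(\<lambda>t. r2 (r1 t)) \<in> time_changes"
proof -
  have c: "continuous_on {0..1} (\<lambda>t. r2 (r1 t))"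
    using r1 r2 unfolding time_changes_def
    by (intro continuous_on_compose2[of "{0..1}" r2 "{0..1}" r1]) auto
  have s: "strict_mono_on {0..1} (\<lambda>t. r2 (r1 t))"
    by (rule strict_mono_onI) (intro tc_smono[OF r2] tc_smono[OF r1] tc_in[OF r1]; simp)
  have "(\<lambda>t. r2 (r1 t)) ` {0..1} = {0..1}"
    using r1 r2 unfolding time_changes_def by (simp add: image_image[symmetric])
  then show ?thesis using c s unfolding time_changes_def by blast
qed

definition V :: "(real \<Rightarrow> real) \<Rightarrow> (real \<Rightarrow> real) \<Rightarrow> (real \<Rightarrow> real) \<Rightarrow> real" where
  "V x y r = max (SUP t\<in>{0..1}. \<bar>r t - t\<bar>) (SUP t\<in>{0..1}. \<bar>x t - y (r t)\<bar>)"

lemma sk_eq: "skorohod_dist x y = Inf ((V x y) ` time_changes)"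
  unfolding skorohod_dist_def V_def by (simp add: Setcompr_eq_image)

lemma id_time_change: "(\<lambda>t. t) \<in> time_changes"
  unfolding time_changes_def by (auto simp: strict_mono_on_def continuous_on_id)

lemma tc_nonempty: "time_changes \<noteq> {}"
  using id_time_change by blast

lemma bdd1: "r \<in> time_changes \<Longrightarrow> bdd_above ((\<lambda>t. \<bar>r t - t\<bar>) ` {0..1})"
  by (rule bdd_aboveI2[where M=2]) (use tc_in in fastforce)

lemma V_nonneg: "r \<in> time_changes \<Longrightarrow> 0 \<le> V x y r"
proof -
  assume r: "r \<in> time_changes"
  have "\<bar>r 0 - 0\<bar> \<le> (SUP t\<in>{0..1}. \<bar>r t - t\<bar>)" by (rule cSUP_upper[OF _ bdd1[OF r]]) auto
  then show ?thesis unfolding V_def by linarith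
qed

lemma bddV: "bdd_below (V x y ` time_changes)"
  by (rule bdd_belowI2[where m=0]) (rule V_nonneg)

lemma sk_nonneg: "0 \<le> skorohod_dist x y"
  unfolding sk_eq using tc_nonempty by (intro cInf_greatest) (auto intro: V_nonneg)

lemma sk_le: "r \<in> time_changes \<Longrightarrow> skorohod_dist x y \<le> V x y r"
  unfolding sk_eq by (intro cInf_lower bddV) auto

lemma sk_lt: "skorohod_dist x y < e \<Longrightarrow> \<exists>r\<in>time_changes. V x y r < e"
  unfolding sk_eq using cInf_lessD[of "V x y ` time_changes" e] tc_nonempty by blast

lemma V_sub: "V x y ` time_changes \<subseteq> V y x ` time_changes"
proof
  fix v assume "v \<in> V x y ` time_changes"
  then obtain r where r: "r \<in> time_changes" and v: "v = V x y r" by blast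
  define g where "g = the_inv_into {0..1} r"
  note gi = tc_inv[OF r, folded g_def]
  have e1: "(\<lambda>t. \<bar>r t - t\<bar>) ` {0..1} = (\<lambda>t. \<bar>g t - t\<bar>) ` {0..1}"
  proof (intro equalityI subsetI)
    fix z assume "z \<in> (\<lambda>t. \<bar>r t - t\<bar>) ` {0..1}"
    then obtain t where t: "t \<in> {0..1}" "z = \<bar>r t - t\<bar>" by blast
    then have "z = \<bar>g (r t) - r t\<bar>" using gi by auto
    then show "z \<in> (\<lambda>t. \<bar>g t - t\<bar>) ` {0..1}" using tc_in[OF r t(1)] by blast
  next
    fix z assume "z \<in> (\<lambda>t. \<bar>g t - t\<bar>) ` {0..1}"
    then obtain t where t: "t \<in> {0..1}" "z = \<bar>g t - t\<bar>" by blast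
    then have "z = \<bar>r (g t) - g t\<bar>" using gi by (simp add: abs_minus_commute)
    then show "z \<in> (\<lambda>t. \<bar>r t - t\<bar>) ` {0..1}" using gi(4)[OF t(1)] by blast
  qed
  have e2: "(\<lambda>t. \<bar>x t - y (r t)\<bar>) ` {0..1} = (\<lambda>t. \<bar>y t - x (g t)\<bar>) ` {0..1}"
  proof (intro equalityI subsetI)
    fix z assume "z \<in> (\<lambda>t. \<bar>x t - y (r t)\<bar>) ` {0..1}"
    then obtain t where t: "t \<in> {0..1}" "z = \<bar>x t - y (r t)\<bar>" by blast
    then have "z = \<bar>y (r t) - x (g (r t))\<bar>" using gi by (simp add: abs_minus_commute)
    then show "z \<in> (\<lambda>t. \<bar>y t - x (g t)\<bar>) ` {0..1}" using tc_in[OF r t(1)] by blast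
  next
    fix z assume "z \<in> (\<lambda>t. \<bar>y t - x (g t)\<bar>) ` {0..1}"
    then obtain t where t: "t \<in> {0..1}" "z = \<bar>y t - x (g t)\<bar>" by blast
    then have "z = \<bar>x (g t) - y (r (g t))\<bar>" using gi by (simp add: abs_minus_commute)
    then show "z \<in> (\<lambda>t. \<bar>x t - y (r t)\<bar>) ` {0..1}" using gi(4)[OF t(1)] by blast
  qed
  have "v = V y x g" unfolding v V_def e1 e2 ..
  then show "v \<in> V y x ` time_changes" using gi(1) by blast
qed

lemma sk_commute: "skorohod_dist x y = skorohod_dist y x"
  unfolding sk_eq using V_sub[of x y] V_sub[of y x] by (simp add: subset_antisym)

lemma V_bounds:
  assumes x: "\<forall>t\<in>{0..1}. \<bar>x t\<bar> \<le> Bx" and y: "\<forall>t\<in>{0..1}. \<bar>y t\<bar> \<le> By"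
    and r: "r \<in> time_changes" and t: "t \<in> {0..1}"
  shows "\<bar>r t - t\<bar> \<le> V x y r" "\<bar>x t - y (r t)\<bar> \<le> V x y r"
proof -
  have b2: "bdd_above ((\<lambda>t. \<bar>x t - y (r t)\<bar>) ` {0..1})"
  proof (rule bdd_aboveI2)
    fix t :: real assume "t \<in> {0..1}" then show "\<bar>x t - y (r t)\<bar> \<le> Bx + By"
      using tc_in[OF r, of t] x y by (smt (verit, best))
  qed
  show "\<bar>r t - t\<bar> \<le> V x y r" using cSUP_upper[OF t bdd1[OF r]] unfolding V_def by linarith
  show "\<bar>x t - y (r t)\<bar> \<le> V x y r" using cSUP_upper[OF t b2] unfolding V_def by linarith
qed

lemma V_upper:
  assumes "\<And>t. t \<in> {0..1} \<Longrightarrow> \<bar>r t - t\<bar> \<le> e" "\<And>t. t \<in> {0..1} \<Longrightarrow> \<bar>x t - y (r t)\<bar> \<le> e"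
  shows "V x y r \<le> e"
  unfolding V_def using assms by (intro max.boundedI cSUP_least) auto


lemma cadlag_bounded:
  assumes x: "x \<in> cadlag"
  shows "\<exists>B. \<forall>t\<in>{0..1}. \<bar>x t\<bar> \<le> B"
proof -
  have loc: "\<exists>d>0. \<exists>B. \<forall>u\<in>{0..1}. \<bar>u - t\<bar> < d \<longrightarrow> \<bar>x u\<bar> \<le> B" if t: "t \<in> {0..1}" for t
  proof -
    obtain b1 where b1: "b1 > t" "\<forall>u. t < u \<and> u < b1 \<and> u \<le> 1 \<longrightarrow> \<bar>x u\<bar> \<le> \<bar>x t\<bar> + 1"
    proof (cases "t < 1")
      case True
      then have "(x \<longlongrightarrow> x t) (at_right t)" using x t unfolding cadlag_def by auto
      then have "eventually (\<lambda>u. dist (x u) (x t) < 1) (at_right t)"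
        by (rule tendstoD) simp
      then obtain b where "b > t" "\<forall>u>t. u < b \<longrightarrow> dist (x u) (x t) < 1"
        unfolding eventually_at_right_field by blast
      then show ?thesis by (intro that[of b]) (auto simp: dist_real_def)
    next
      case False
      then show ?thesis using t by (intro that[of 2]) auto
    qed
    obtain b0 l where b0: "b0 < t" "\<forall>u. b0 < u \<and> u < t \<and> 0 \<le> u \<longrightarrow> \<bar>x u\<bar> \<le> \<bar>l\<bar> + 1"
    proof (cases "t > 0")
      case True
      have "\<exists>l. (x \<longlongrightarrow> l) (at_left t)" using x t True unfolding cadlag_def by auto
      then obtain l where "(x \<longlongrightarrow> l) (at_left t)" by blast
      then have "eventually (\<lambda>u. dist (x u) l < 1) (at_left t)"
        by (rule tendstoD) simp
      then obtain b where "b < t" "\<forall>u>b. u < t \<longrightarrow> dist (x u) l < 1"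
        unfolding eventually_at_left_field by blast
      then show ?thesis by (intro that[of b l]) (auto simp: dist_real_def)
    next
      case False
      then show ?thesis using t by (intro that[of "-1" 0]) auto
    qed
    show ?thesis
    proof (intro exI conjI ballI impI)
      show "min (b1 - t) (t - b0) > 0" using b0 b1 by auto
      fix u :: real assume u: "u \<in> {0..1}" "\<bar>u - t\<bar> < min (b1 - t) (t - b0)"
      consider "u = t" | "u > t" | "u < t" by linarith
      then show "\<bar>x u\<bar> \<le> \<bar>x t\<bar> + \<bar>l\<bar> + 1"
      proof cases
        case 2 then show ?thesis using b1(2)[rule_format, of u] u by auto
      next
        case 3 then show ?thesis using b0(2)[rule_format, of u] u by auto
      qed auto
    qed
  qed
  then obtain d where d: "\<And>t. t \<in> {0..1} \<Longrightarrow> d t > 0 \<and> (\<exists>B. \<forall>u\<in>{0..1}. \<bar>u - t\<bar> < d t \<longrightarrow> \<bar>x u\<bar> \<le> B)"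
    by metis
  then obtain Bf where Bf: "\<And>t. t \<in> {0..1} \<Longrightarrow> d t > 0 \<and> (\<forall>u\<in>{0..1}. \<bar>u - t\<bar> < d t \<longrightarrow> \<bar>x u\<bar> \<le> Bf t)"
    by metis
  have cpt: "compact {0..1::real}" by simp
  have cover: "{0..1::real} \<subseteq> (\<Union>t\<in>{0..1}. ball t (d t))"
    using Bf by force
  obtain K where K: "K \<subseteq> {0..1}" "finite K" "{0..1::real} \<subseteq> (\<Union>t\<in>K. ball t (d t))"
    apply (rule compactE_image[OF cpt _ cover])
    by auto
  show ?thesis
  proof (intro exI ballI)
    fix u :: real assume u: "u \<in> {0..1}"
    then obtain t where t: "t \<in> K" "u \<in> ball t (d t)" using K by blast
    then have "\<bar>x u\<bar> \<le> Bf t" using Bf[of t] K u by (auto simp: dist_real_def abs_minus_commute)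
    also have "\<dots> \<le> \<bar>Bf t\<bar>" by simp
    also have "\<dots> \<le> (\<Sum>t\<in>K. \<bar>Bf t\<bar>)" using t K by (intro member_le_sum) auto
    finally show "\<bar>x u\<bar> \<le> (\<Sum>t\<in>K. \<bar>Bf t\<bar>)" .
  qed
qed


lemma sk_zero:
  assumes x: "x \<in> cadlag" and y: "y \<in> cadlag" and d: "skorohod_dist x y = 0"
  shows "x = y"
proof
  fix t :: real
  obtain Bx where Bx: "\<forall>t\<in>{0..1}. \<bar>x t\<bar> \<le> Bx" using cadlag_bounded[OF x] by blast
  obtain By where By: "\<forall>t\<in>{0..1}. \<bar>y t\<bar> \<le> By" using cadlag_bounded[OF y] by blast
  have close: "\<exists>r\<in>time_changes. \<forall>u\<in>{0..1}. \<bar>r u - u\<bar> < e \<and> \<bar>x u - y (r u)\<bar> < e" if "e > 0" for e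
  proof -
    have "skorohod_dist x y < e" using d that by simp
    then obtain r where r: "r \<in> time_changes" "V x y r < e" using sk_lt[of x y e] by blast
    show ?thesis using V_bounds[OF Bx By r(1)] r by (intro bexI[OF _ r(1)]) fastforce
  qed
  consider "t \<notin> {0..1}" | "t = 1" | "t \<in> {0..<1}" by fastforce
  then show "x t = y t"
  proof cases
    case 1
    have "x \<in> extensional {0..1}" "y \<in> extensional {0..1}" using x y by (simp_all add: cadlag_def)
    then show ?thesis using extensional_arb[OF _ 1] by metis
  next
    case 2
    have lt: "\<bar>x 1 - y 1\<bar> < e" if e: "e > 0" for e
    proof -
      obtain r where r: "r \<in> time_changes" "\<forall>u\<in>{0..1}. \<bar>r u - u\<bar> < e \<and> \<bar>x u - y (r u)\<bar> < e"
        using close[OF e] by blast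
      have "\<bar>x 1 - y (r 1)\<bar> < e" using r(2) by simp
      then show ?thesis using tc_one[OF r(1)] by simp
    qed
    show ?thesis
    proof (rule ccontr)
      assume "x t \<noteq> y t"
      then have "\<bar>x 1 - y 1\<bar> > 0" using 2 by simp
      then show False using lt[of "\<bar>x 1 - y 1\<bar>"] by simp
    qed
  next
    case 3
    show ?thesis
    proof (rule ccontr)
      assume ne: "x t \<noteq> y t"
      define \<eta> where "\<eta> = \<bar>x t - y t\<bar>"
      have \<eta>: "\<eta> > 0" using ne unfolding \<eta>_def by auto
      have lx: "(x \<longlongrightarrow> x t) (at_right t)" and ly: "(y \<longlongrightarrow> y t) (at_right t)"
        using x y 3 unfolding cadlag_def by auto
      have q: "\<eta>/4 > 0" using \<eta> by simp
      have "eventually (\<lambda>u. dist (x u) (x t) < \<eta>/4) (at_right t)"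
        "eventually (\<lambda>u. dist (y u) (y t) < \<eta>/4) (at_right t)"
        using tendstoD[OF lx q] tendstoD[OF ly q] by auto
      then have "eventually (\<lambda>u. dist (x u) (x t) < \<eta>/4 \<and> dist (y u) (y t) < \<eta>/4) (at_right t)"
        by (rule eventually_conj)
      then obtain b where b: "b > t" "\<forall>u>t. u < b \<longrightarrow> \<bar>x u - x t\<bar> < \<eta>/4 \<and> \<bar>y u - y t\<bar> < \<eta>/4"
        unfolding eventually_at_right_field dist_real_def by blast
      define c where "c = min b 1"
      have c: "c > t" "c \<le> 1" "c \<le> b" using b 3 unfolding c_def by auto
      define u where "u = (t + c) / 2"
      define \<epsilon> where "\<epsilon> = min ((c - t)/2) (\<eta>/4)"
      have "\<epsilon> > 0" using c \<eta> unfolding \<epsilon>_def by auto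
      then obtain r where r: "r \<in> time_changes" "\<forall>u\<in>{0..1}. \<bar>r u - u\<bar> < \<epsilon> \<and> \<bar>x u - y (r u)\<bar> < \<epsilon>"
        using close by blast
      have u01: "u \<in> {0..1}" using c 3 unfolding u_def by auto
      have 1: "\<bar>r u - u\<bar> < \<epsilon>" "\<bar>x u - y (r u)\<bar> < \<epsilon>" using r(2) u01 by auto
      have "\<bar>r u - u\<bar> < (c - t)/2" using 1(1) unfolding \<epsilon>_def by simp
      then have "r u - u < (c - t)/2" "u - r u < (c - t)/2" by arith+
      moreover have "u - (c - t)/2 = t" "u + (c - t)/2 = c" unfolding u_def by (simp_all add: field_simps)
      ultimately have "t < r u" "r u < b" using c by - (linarith, linarith)
      then have 2: "\<bar>y (r u) - y t\<bar> < \<eta>/4" using b by auto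
      have "t < u" "u < b" using c unfolding u_def by auto
      then have 4: "\<bar>x u - x t\<bar> < \<eta>/4" using b by auto
      have "\<bar>x t - y t\<bar> < \<eta>" using 1(2) 2 4 unfolding \<epsilon>_def by linarith
      then show False unfolding \<eta>_def by simp
    qed
  qed
qed

lemma sk_triangle:
  assumes x: "x \<in> cadlag" and y: "y \<in> cadlag" and z: "z \<in> cadlag"
  shows "skorohod_dist x z \<le> skorohod_dist x y + skorohod_dist y z"
proof (rule field_le_epsilon)
  fix e :: real assume e: "e > 0"
  obtain Bx where Bx: "\<forall>t\<in>{0..1}. \<bar>x t\<bar> \<le> Bx" using cadlag_bounded[OF x] by blast
  obtain By where By: "\<forall>t\<in>{0..1}. \<bar>y t\<bar> \<le> By" using cadlag_bounded[OF y] by blast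
  obtain Bz where Bz: "\<forall>t\<in>{0..1}. \<bar>z t\<bar> \<le> Bz" using cadlag_bounded[OF z] by blast
  obtain r1 where r1: "r1 \<in> time_changes" "V x y r1 < skorohod_dist x y + e/2"
    using sk_lt[of x y "skorohod_dist x y + e/2"] e by auto
  obtain r2 where r2: "r2 \<in> time_changes" "V y z r2 < skorohod_dist y z + e/2"
    using sk_lt[of y z "skorohod_dist y z + e/2"] e by auto
  have "V x z (\<lambda>t. r2 (r1 t)) \<le> V x y r1 + V y z r2"
  proof (rule V_upper)
    fix t :: real assume t: "t \<in> {0..1}"
    have t1: "r1 t \<in> {0..1}" by (rule tc_in[OF r1(1) t])
    show "\<bar>r2 (r1 t) - t\<bar> \<le> V x y r1 + V y z r2"
      using V_bounds(1)[OF Bx By r1(1) t] V_bounds(1)[OF By Bz r2(1) t1] by linarith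
    show "\<bar>x t - z (r2 (r1 t))\<bar> \<le> V x y r1 + V y z r2"
      using V_bounds(2)[OF Bx By r1(1) t] V_bounds(2)[OF By Bz r2(1) t1] by linarith
  qed
  moreover have "skorohod_dist x z \<le> V x z (\<lambda>t. r2 (r1 t))"
    by (rule sk_le[OF tc_comp[OF r1(1) r2(1)]])
  ultimately show "skorohod_dist x z \<le> skorohod_dist x y + skorohod_dist y z + e"
    using r1 r2 by linarith
qed

lemma sk_metric: "Metric_space cadlag skorohod_dist"
proof
  fix x y
  show "0 \<le> skorohod_dist x y" by (rule sk_nonneg)
  show "skorohod_dist x y = skorohod_dist y x" by (rule sk_commute)
next
  fix x y assume "x \<in> cadlag" "y \<in> cadlag"
  then show "(skorohod_dist x y = 0) = (x = y)"
    using sk_zero[of x y] sk_le[OF id_time_change, of x x] sk_nonneg[of x x]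
    by (auto simp: V_def)
next
  fix x y z assume "x \<in> cadlag" "y \<in> cadlag" "z \<in> cadlag"
  then show "skorohod_dist x z \<le> skorohod_dist x y + skorohod_dist y z" by (rule sk_triangle)
qed

lemma openin_sk:
  "openin skorohod_topology U \<longleftrightarrow> U \<subseteq> cadlag \<and> (\<forall>x\<in>U. \<exists>r>0. Metric_space.mball cadlag skorohod_dist x r \<subseteq> U)"
  unfolding skorohod_topology_def using Metric_space.openin_mtopology[OF sk_metric] by blast

lemma topspace_sk[simp]: "topspace skorohod_topology = cadlag"
  unfolding skorohod_topology_def using Metric_space.topspace_mtopology[OF sk_metric] .

lemma in_mball_sk: "x \<in> Metric_space.mball cadlag skorohod_dist y e \<longleftrightarrow> y \<in> cadlag \<and> x \<in> cadlag \<and> skorohod_dist y x < e"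
  using Metric_space.in_mball[OF sk_metric] by blast


definition Eset :: "real \<Rightarrow> real \<Rightarrow> real \<Rightarrow> (real \<Rightarrow> real) set" where
  "Eset a b c = {x\<in>cadlag. \<exists>u. a < u \<and> u < b \<and> 0 \<le> u \<and> u \<le> 1 \<and> c < x u}"

lemma Eset_open: "openin skorohod_topology (Eset a b c)"
  unfolding openin_sk
proof (intro conjI ballI)
  show "Eset a b c \<subseteq> cadlag" unfolding Eset_def by auto
  fix y assume "y \<in> Eset a b c"
  then obtain u0 where y: "y \<in> cadlag" and u0: "a < u0" "u0 < b" "0 \<le> u0" "u0 \<le> 1" "c < y u0"
    unfolding Eset_def by blast
  define \<epsilon> where "\<epsilon> = min (y u0 - c) (min (u0 - a) (b - u0))"
  have "\<epsilon> > 0" using u0 unfolding \<epsilon>_def by auto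
  moreover have "Metric_space.mball cadlag skorohod_dist y \<epsilon> \<subseteq> Eset a b c"
  proof
    fix x assume "x \<in> Metric_space.mball cadlag skorohod_dist y \<epsilon>"
    then have x: "x \<in> cadlag" and d: "skorohod_dist y x < \<epsilon>" by (auto simp: in_mball_sk)
    obtain By where By: "\<forall>t\<in>{0..1}. \<bar>y t\<bar> \<le> By" using cadlag_bounded[OF y] by blast
    obtain Bx where Bx: "\<forall>t\<in>{0..1}. \<bar>x t\<bar> \<le> Bx" using cadlag_bounded[OF x] by blast
    obtain r where r1: "r \<in> time_changes" "V y x r < \<epsilon>" using sk_lt[OF d] by blast
    have r: "r \<in> time_changes" "\<forall>t\<in>{0..1}. \<bar>r t - t\<bar> < \<epsilon> \<and> \<bar>y t - x (r t)\<bar> < \<epsilon>"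
      using r1 V_bounds[OF By Bx r1(1)] by fastforce+
    have rin: "r u0 \<in> {0..1}" using r(1) u0 unfolding time_changes_def by auto
    have "\<bar>r u0 - u0\<bar> < \<epsilon>" "\<bar>y u0 - x (r u0)\<bar> < \<epsilon>" using r(2) u0 by auto
    then have "a < r u0 \<and> r u0 < b \<and> 0 \<le> r u0 \<and> r u0 \<le> 1 \<and> c < x (r u0)"
      using rin unfolding \<epsilon>_def by auto
    then show "x \<in> Eset a b c" using x unfolding Eset_def by blast
  qed
  ultimately show "\<exists>r>0. Metric_space.mball cadlag skorohod_dist y r \<subseteq> Eset a b c" by blast
qed


lemma Eset_sets: "Eset a b c \<in> sets (borel_of_top skorohod_topology)"
  by (rule openin_borel_of_top[OF Eset_open])

lemma aux_contra: "(a::real) < b + (c - b) / 2 \<Longrightarrow> h < (c - b) / 2 \<Longrightarrow> c - h < a \<Longrightarrow> False"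
  by (simp add: field_simps)

lemma eval_meas_01:
  assumes v: "0 \<le> v" "v < 1"
  shows "(\<lambda>s. s v) \<in> borel_of_top skorohod_topology \<rightarrow>\<^sub>M borel"
proof (rule borel_measurableI_ge)
  fix c :: real
  have eq: "{x \<in> space (borel_of_top skorohod_topology). c \<le> x v}
        = (\<Inter>n. Eset v (v + 1 / real (Suc n)) (c - 1 / real (Suc n)))"
  proof (intro equalityI subsetI)
    fix x assume "x \<in> {x \<in> space (borel_of_top skorohod_topology). c \<le> x v}"
    then have x: "x \<in> cadlag" and cx: "c \<le> x v" by auto
    show "x \<in> (\<Inter>n. Eset v (v + 1 / real (Suc n)) (c - 1 / real (Suc n)))"
    proof
      fix n
      let ?h = "1 / real (Suc n)"
      have h: "?h > 0" by simp
      have lx: "(x \<longlongrightarrow> x v) (at_right v)" using x v unfolding cadlag_def by auto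
      have e1: "eventually (\<lambda>u. dist (x u) (x v) < ?h) (at_right v)" by (rule tendstoD[OF lx h])
      obtain b where b: "b > v" "\<forall>u>v. u < b \<longrightarrow> dist (x u) (x v) < ?h"
        using e1 unfolding eventually_at_right_field by blast
      have m: "v < min b (min 1 (v + ?h))" using b v h by auto
      then obtain u where u: "v < u" "u < min b (min 1 (v + ?h))" using dense by blast
      then have "dist (x u) (x v) < ?h" using b by auto
      then have "c - ?h < x u" using cx by (auto simp: dist_real_def abs_less_iff)
      moreover have "v < u" "u < v + ?h" "0 \<le> u" "u \<le> 1" using u v by auto
      ultimately show "x \<in> Eset v (v + ?h) (c - ?h)" unfolding Eset_def using x by blast
    qed
  next
    fix x assume xin: "x \<in> (\<Inter>n. Eset v (v + 1 / real (Suc n)) (c - 1 / real (Suc n)))"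
    then have x: "x \<in> cadlag" unfolding Eset_def by auto
    have cx: "c \<le> x v"
    proof (rule ccontr)
      assume "\<not> c \<le> x v"
      define \<delta> where "\<delta> = (c - x v) / 2"
      have \<delta>: "\<delta> > 0" using \<open>\<not> c \<le> x v\<close> unfolding \<delta>_def by auto
      have lx: "(x \<longlongrightarrow> x v) (at_right v)" using x v unfolding cadlag_def by auto
      have e1: "eventually (\<lambda>u. dist (x u) (x v) < \<delta>) (at_right v)" by (rule tendstoD[OF lx \<delta>])
      obtain b where b: "b > v" "\<forall>u>v. u < b \<longrightarrow> dist (x u) (x v) < \<delta>"
        using e1 unfolding eventually_at_right_field by blast
      have mpos: "min (b - v) \<delta> > 0" using b \<delta> by auto
      obtain n where n: "1 / real (Suc n) < min (b - v) \<delta>"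
        by (rule nat_approx_posE[OF mpos])
      have "x \<in> Eset v (v + 1 / real (Suc n)) (c - 1 / real (Suc n))" using xin by blast
      then obtain u where u: "v < u" "u < v + 1 / real (Suc n)" "c - 1 / real (Suc n) < x u"
        unfolding Eset_def by blast
      have "u < b" using u n by auto
      then have "dist (x u) (x v) < \<delta>" using b u by auto
      then have "x u < x v + \<delta>" by (auto simp: dist_real_def abs_less_iff)
      moreover have "1 / real (Suc n) < \<delta>" using n by simp
      ultimately show False using u(3) unfolding \<delta>_def by (rule aux_contra)
    qed
    show "x \<in> {x \<in> space (borel_of_top skorohod_topology). c \<le> x v}"
      unfolding space_borel_of_top topspace_sk using x cx by blast
  qed
  show "{x \<in> space (borel_of_top skorohod_topology). c \<le> x v} \<in> sets (borel_of_top skorohod_topology)"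
  proof -
    have "(\<Inter>n. Eset v (v + 1 / real (Suc n)) (c - 1 / real (Suc n))) \<in> sets (borel_of_top skorohod_topology)"
      by (rule sets.countable_INT) (use Eset_sets in blast)+
    then show ?thesis by (simp only: eq)
  qed
qed

lemma eval_meas:
  assumes v: "v < 1"
  shows "(\<lambda>s. s v) \<in> borel_of_top skorohod_topology \<rightarrow>\<^sub>M borel"
proof (cases "0 \<le> v")
  case True then show ?thesis using eval_meas_01 v by blast
next
  case False
  have eqs: "s v = undefined" if "s \<in> space (borel_of_top skorohod_topology)" for s
  proof -
    have "s \<in> cadlag" using that by (simp only: space_borel_of_top topspace_sk)
    then have "s \<in> extensional {0..1}" unfolding cadlag_def by blast
    then show ?thesis using False extensional_arb[of s "{0..1}" v] by auto
  qed
  have "((\<lambda>s. s v) \<in> borel_of_top skorohod_topology \<rightarrow>\<^sub>M (borel :: real measure)) \<longleftrightarrow>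
        ((\<lambda>s. undefined) \<in> borel_of_top skorohod_topology \<rightarrow>\<^sub>M (borel :: real measure))"
    by (rule measurable_cong) (rule eqs)
  then show ?thesis by simp
qed


lemma id_Leb01[measurable]: "(\<lambda>t::real. t) \<in> Leb01 \<rightarrow>\<^sub>M borel"
  by (simp add: Leb01_def measurable_restrict_space1)

lemma space_Leb01[simp]: "space Leb01 = {0..1}"
  by (simp add: Leb01_def space_restrict_space)

definition wgrid :: "nat \<Rightarrow> real \<Rightarrow> real" where
  "wgrid m t = min ((real_of_int \<lfloor>real (Suc m) * t\<rfloor> + 1) / real (Suc m)) (1 - 1 / (real m + 2))"

definition Sfun :: "(real \<Rightarrow> real) \<Rightarrow> real \<Rightarrow> real" where
  "Sfun s t = lim (\<lambda>m. s (wgrid m t))"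

lemma wgrid_meas:
  fixes M :: "'a measure"
  assumes f: "f \<in> M \<rightarrow>\<^sub>M borel"
  shows "(\<lambda>p. fst p (wgrid m (f (snd p)))) \<in> (borel_of_top skorohod_topology \<Otimes>\<^sub>M M) \<rightarrow>\<^sub>M borel"
proof -
  let ?P = "borel_of_top skorohod_topology \<Otimes>\<^sub>M M"
  let ?v = "\<lambda>k::int. min ((real_of_int k + 1) / real (Suc m)) (1 - 1 / (real m + 2))"
  have fk: "(\<lambda>p. fst p (?v k)) \<in> ?P \<rightarrow>\<^sub>M borel" for k
  proof -
    have "1 - 1 / (real m + 2) < 1" by simp
    then have "?v k < 1" by (rule min.strict_coboundedI2)
    then have "(\<lambda>s. s (?v k)) \<in> borel_of_top skorohod_topology \<rightarrow>\<^sub>M borel" by (rule eval_meas)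
    then show ?thesis by (rule measurable_compose[OF measurable_fst])
  qed
  have g: "(\<lambda>p. \<lfloor>real (Suc m) * f (snd p)\<rfloor>) \<in> ?P \<rightarrow>\<^sub>M count_space UNIV"
  proof (rule measurable_compose[OF _ measurable_real_floor])
    have "(\<lambda>p. f (snd p)) \<in> ?P \<rightarrow>\<^sub>M borel" by (rule measurable_compose[OF measurable_snd f])
    then show "(\<lambda>p. real (Suc m) * f (snd p)) \<in> ?P \<rightarrow>\<^sub>M borel" by measurable
  qed
  have "(\<lambda>p. fst p (?v \<lfloor>real (Suc m) * f (snd p)\<rfloor>)) \<in> ?P \<rightarrow>\<^sub>M borel"
    by (rule measurable_compose_countable[OF fk g])
  then show ?thesis unfolding wgrid_def .
qed

lemma Sfun_meas:
  "(\<lambda>p. Sfun (fst p) (snd p)) \<in> (borel_of_top skorohod_topology \<Otimes>\<^sub>M Leb01) \<rightarrow>\<^sub>M borel"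
  unfolding Sfun_def
  by (rule borel_measurable_lim_metric) (rule wgrid_meas[OF id_Leb01])

lemma wgrid_lim:
  assumes t: "t \<in> {0..<1}"
  shows "filterlim (\<lambda>m. wgrid m t) (at_right t) sequentially"
proof -
  have up: "wgrid m t \<le> t + inverse (real (Suc m))" for m
  proof -
    define F where "F = real_of_int \<lfloor>real (Suc m) * t\<rfloor>"
    have "F \<le> real (Suc m) * t" unfolding F_def by (rule of_int_floor_le)
    then have "F / real (Suc m) \<le> t"
      by (subst pos_divide_le_eq) (simp_all add: mult.commute del: of_nat_Suc)
    moreover have "(F + 1) / real (Suc m) = F / real (Suc m) + inverse (real (Suc m))"
      by (simp add: add_divide_distrib divide_inverse distrib_right del: of_nat_Suc)
    ultimately have "(real_of_int \<lfloor>real (Suc m) * t\<rfloor> + 1) / real (Suc m) \<le> t + inverse (real (Suc m))"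
      unfolding F_def by linarith
    then show ?thesis unfolding wgrid_def by linarith
  qed
  have gt1: "t < (real_of_int \<lfloor>real (Suc m) * t\<rfloor> + 1) / real (Suc m)" for m
  proof -
    have "real (Suc m) * t < real_of_int \<lfloor>real (Suc m) * t\<rfloor> + 1" by linarith
    then show ?thesis by (simp add: field_simps)
  qed
  have "(\<lambda>m. inverse (real m + 2)) \<longlonglongrightarrow> 0"
  proof -
    have "(\<lambda>m. inverse (real (Suc (Suc m)))) \<longlonglongrightarrow> 0"
      using LIMSEQ_inverse_real_of_nat by (rule LIMSEQ_Suc)
    then show ?thesis by (simp add: add.commute)
  qed
  moreover have "1 - t > 0" using t by auto
  ultimately have "eventually (\<lambda>m. inverse (real m + 2) < 1 - t) sequentially"
    by (rule order_tendstoD)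
  then have ev: "eventually (\<lambda>m. t < wgrid m t) sequentially"
  proof (rule eventually_mono)
    fix m assume "inverse (real m + 2) < 1 - t"
    then have "t < 1 - 1 / (real m + 2)" by (simp add: divide_inverse)
    then show "t < wgrid m t" unfolding wgrid_def using gt1[of m] by simp
  qed
  have lim: "(\<lambda>m. wgrid m t) \<longlonglongrightarrow> t"
  proof (rule tendsto_sandwich[of "\<lambda>m. t" _ _ "\<lambda>m. t + inverse (real (Suc m))"])
    show "eventually (\<lambda>m. t \<le> wgrid m t) sequentially" using ev by (rule eventually_mono) simp
    show "eventually (\<lambda>m. wgrid m t \<le> t + inverse (real (Suc m))) sequentially" using up by simp
    show "(\<lambda>m. t) \<longlonglongrightarrow> t" by simp
    show "(\<lambda>m. t + inverse (real (Suc m))) \<longlonglongrightarrow> t"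
      using tendsto_add[OF tendsto_const[of t] LIMSEQ_inverse_real_of_nat] by simp
  qed
  show ?thesis unfolding filterlim_at
    using lim ev by (auto elim: eventually_mono)
qed

lemma Sfun_eq:
  assumes s: "s \<in> cadlag" and t: "t \<in> {0..<1}"
  shows "Sfun s t = s t"
proof -
  have "(s \<longlongrightarrow> s t) (at_right t)" using s t unfolding cadlag_def by auto
  then have "(\<lambda>m. s (wgrid m t)) \<longlonglongrightarrow> s t"
    by (rule filterlim_compose[OF _ wgrid_lim[OF t]])
  then show ?thesis unfolding Sfun_def by (rule limI)
qed


lemma sets_Leb01[simp]: "sets Leb01 = sets (restrict_space lborel {0..1})"
  by (simp add: Leb01_def)

lemma Leb01_finite: "finite_measure Leb01"
proof
  have "emeasure Leb01 (space Leb01) = emeasure lborel {0..1::real}"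
    unfolding Leb01_def by (simp add: emeasure_restrict_space space_restrict_space)
  then show "emeasure Leb01 (space Leb01) \<noteq> \<infinity>" by simp
qed

lemma zero_Lp: "(\<lambda>t. 0) \<in> Lp01 q"
  unfolding Lp01_def by simp

lemma topspace_weak: "topspace (weak_Lp_topology p) = Lp01 p"
proof -
  have "Lp01 p \<in> {{f \<in> Lp01 p. (\<integral>t. f t * g t \<partial>Leb01) \<in> U} | g U.
         g \<in> Lp01 (p / (p - 1)) \<and> open U}"
    using zero_Lp by (intro CollectI exI[of _ "\<lambda>t. 0"] exI[of _ UNIV]) auto
  then show ?thesis unfolding weak_Lp_topology_def topology_generated_by_topspace by blast
qed

lemma space_weak[simp]: "space (borel_of_top (weak_Lp_topology p)) = Lp01 p"
  by (simp add: topspace_weak)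

lemma ell_meas:
  assumes g: "g \<in> Lp01 (p / (p - 1))"
  shows "(\<lambda>f. \<integral>t. f t * g t \<partial>Leb01) \<in> borel_of_top (weak_Lp_topology p) \<rightarrow>\<^sub>M borel"
proof (rule borel_measurableI)
  fix S :: "real set" assume S: "open S"
  have "(\<lambda>f. \<integral>t. f t * g t \<partial>Leb01) -` S \<inter> space (borel_of_top (weak_Lp_topology p))
      = {f \<in> Lp01 p. (\<integral>t. f t * g t \<partial>Leb01) \<in> S}" by (auto simp: topspace_weak)
  moreover have "openin (weak_Lp_topology p) {f \<in> Lp01 p. (\<integral>t. f t * g t \<partial>Leb01) \<in> S}"
    unfolding weak_Lp_topology_def
    by (rule topology_generated_by_Basis) (use g S in blast)
  ultimately show "(\<lambda>f. \<integral>t. f t * g t \<partial>Leb01) -` S \<inter> space (borel_of_top (weak_Lp_topology p))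
      \<in> sets (borel_of_top (weak_Lp_topology p))"
    by (simp add: openin_borel_of_top)
qed

lemma ind_Lp:
  assumes q: "q > 0"
  shows "indicator {a..b} \<in> Lp01 q"
proof -
  have m: "(indicator {a..b} :: real \<Rightarrow> real) \<in> borel_measurable Leb01"
    unfolding Leb01_def by (intro measurable_restrict_space1) simp
  have eq: "(\<lambda>t. \<bar>indicator {a..b} t\<bar> powr q) = (indicator {a..b} :: real \<Rightarrow> real)"
    using q by (auto simp: indicator_def)
  have "integrable Leb01 (indicator {a..b} :: real \<Rightarrow> real)"
    using Leb01_finite m
    by (intro finite_measure.integrable_const_bound[where B=1]) (auto simp: indicator_def)
  then have "integrable Leb01 (\<lambda>t. \<bar>indicator {a..b} t\<bar> powr q :: real)" by (subst eq)
  then show ?thesis unfolding Lp01_def using m by blast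
qed

lemma Lp_integrable:
  assumes p: "p \<ge> 1" and f: "f \<in> Lp01 p"
  shows "integrable Leb01 f"
proof -
  have m: "f \<in> borel_measurable Leb01" and i: "integrable Leb01 (\<lambda>t. \<bar>f t\<bar> powr p)"
    using f unfolding Lp01_def by auto
  have i1: "integrable Leb01 (\<lambda>t. 1 + \<bar>f t\<bar> powr p)"
    using i Leb01_finite by (intro Bochner_Integration.integrable_add finite_measure.integrable_const) auto
  have bd: "norm (f t) \<le> norm (1 + \<bar>f t\<bar> powr p)" for t
  proof (cases "\<bar>f t\<bar> \<le> 1")
    case True
    have "0 \<le> \<bar>f t\<bar> powr p" by simp
    then show ?thesis using True by (simp only: real_norm_def abs_abs)
  next
    case False
    then have "\<bar>f t\<bar> = \<bar>f t\<bar> powr 1" by simp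
    also have "\<dots> \<le> \<bar>f t\<bar> powr p" using False p by (intro powr_mono) auto
    finally show ?thesis by simp
  qed
  show ?thesis by (rule Bochner_Integration.integrable_bound[OF i1 m AE_I2[OF bd]])
qed

definition phit :: "(real \<Rightarrow> real) \<Rightarrow> real \<Rightarrow> real" where
  "phit f u = indicator {0..1} u * f u"

lemma phit_integrable:
  assumes f: "integrable Leb01 f"
  shows "integrable lborel (phit f)"
proof -
  have "integrable lborel (\<lambda>x. indicator {0..1} x *\<^sub>R f x)"
    using f unfolding Leb01_def by (subst integrable_restrict_space[symmetric]) auto
  then show ?thesis unfolding phit_def by simp
qed

lemma ell_eq_integral:
  assumes f: "integrable Leb01 f"
  shows "(\<integral>t. f t * indicator {a..b} t \<partial>Leb01) = integral {a..b} (phit f)"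
proof -
  have "(\<integral>t. f t * indicator {a..b} t \<partial>Leb01) = (\<integral>t. indicator {0..1} t *\<^sub>R (f t * indicator {a..b} t) \<partial>lborel)"
    unfolding Leb01_def by (rule integral_restrict_space) simp
  also have "\<dots> = (\<integral>t. indicator {a..b} t *\<^sub>R phit f t \<partial>lborel)"
    unfolding phit_def by (rule Bochner_Integration.integral_cong) auto
  also have "\<dots> = integral {a..b} (phit f)"
  proof -
    have "set_integrable lborel {a..b} (phit f)"
      unfolding set_integrable_def by (rule integrable_mult_indicator) (auto intro: phit_integrable[OF f])
    from set_borel_integral_eq_integral(2)[OF this] show ?thesis unfolding set_lebesgue_integral_def .
  qed
  finally show ?thesis .
qed


definition avg :: "real \<Rightarrow> (real \<Rightarrow> real) \<Rightarrow> real \<Rightarrow> real" where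
  "avg h f t = integral {t..t+h} (phit f) / h"

lemma avg_meas:
  assumes p: "p > 1" and h: "h > 0"
  shows "(\<lambda>f. avg h f t) \<in> borel_of_top (weak_Lp_topology p) \<rightarrow>\<^sub>M borel"
proof -
  have q: "p / (p - 1) > 0" using p by simp
  have m: "(\<lambda>f. (\<integral>u. f u * indicator {t..t+h} u \<partial>Leb01) / h) \<in> borel_of_top (weak_Lp_topology p) \<rightarrow>\<^sub>M borel"
    using ell_meas[OF ind_Lp[OF q, of t "t+h"]] by measurable
  have eq: "(\<integral>u. f u * indicator {t..t+h} u \<partial>Leb01) / h = avg h f t"
    if "f \<in> space (borel_of_top (weak_Lp_topology p))" for f
  proof -
    have "integrable Leb01 f" using that p by (intro Lp_integrable[of p]) (auto simp: topspace_weak)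
    then show ?thesis unfolding avg_def by (simp add: ell_eq_integral)
  qed
  show ?thesis by (rule measurable_cong[THEN iffD1, OF eq m])
qed

lemma avg_cont:
  fixes F :: "real \<Rightarrow> real"
  assumes F: "integrable lborel F" and h: "0 < h" "h \<le> 1" and t0: "t0 \<in> {0..1}"
    and x: "x \<longlonglongrightarrow> t0"
  shows "(\<lambda>m. integral {x m..x m+h} F) \<longlonglongrightarrow> integral {t0..t0+h} F"
proof -
  have Fi: "F integrable_on {a..b}" for a b
    using integrable_on_lborel[OF F] by (rule integrable_on_subinterval) simp
  define G where "G x = integral {-3..x} F" for x
  have Gc: "continuous_on {-3..4} G" unfolding G_def by (rule indefinite_integral_continuous_1[OF Fi])
  define H where "H x = G (x + h) - G x" for x
  have Hc: "continuous_on {-1..2} H"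
    unfolding H_def
  proof (intro continuous_on_diff)
    show "continuous_on {-1..2} G" by (rule continuous_on_subset[OF Gc]) auto
    have "continuous_on {-1..2} (\<lambda>x. x + h)" by (intro continuous_intros)
    moreover have "(\<lambda>x. x + h) ` {-1..2} \<subseteq> {-3..4}" using h by auto
    ultimately show "continuous_on {-1..2} (\<lambda>x. G (x + h))"
      by (rule continuous_on_compose2[OF Gc])
  qed
  have HI: "integral {y..y+h} F = H y" if "y \<in> {-1..2}" for y
  proof -
    have "integral {-3..y} F + integral {y..y+h} F = integral {-3..y+h} F"
      using that h Henstock_Kurzweil_Integration.integral_combine[where a="-3" and c=y and b="y+h" and f=F, OF _ _ Fi] by auto
    then show ?thesis unfolding H_def G_def by simp
  qed
  have "t0 \<in> interior {-1..2}" using t0 by auto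
  then have "isCont H t0" by (rule continuous_on_interior[OF Hc])
  then have "(\<lambda>m. H (x m)) \<longlonglongrightarrow> H t0" by (rule isCont_tendsto_compose[OF _ x])
  moreover have "eventually (\<lambda>m. x m \<in> {-1..2}) sequentially"
  proof -
    have "eventually (\<lambda>m. x m > -1) sequentially" using t0 by (intro order_tendstoD(1)[OF x]) auto
    moreover have "eventually (\<lambda>m. x m < 2) sequentially" using t0 by (intro order_tendstoD(2)[OF x]) auto
    ultimately show ?thesis by eventually_elim auto
  qed
  then have ev: "eventually (\<lambda>m. integral {x m..x m+h} F = H (x m)) sequentially"
    by (rule eventually_mono) (rule HI)
  ultimately have "(\<lambda>m. integral {x m..x m+h} F) \<longlonglongrightarrow> H t0"
    by (simp only: tendsto_cong[OF ev])
  moreover have "H t0 = integral {t0..t0+h} F" using HI[of t0] t0 by simp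
  ultimately show ?thesis by simp
qed

lemma One_real: "(One :: real) = 1"
  by simp

lemma lebesgue_diff:
  fixes F :: "real \<Rightarrow> real"
  assumes F: "integrable lborel F"
  obtains N where "negligible N"
    "\<And>t. t \<notin> N \<Longrightarrow> (\<lambda>n. integral {t..t + 1/real (Suc n)} F / (1/real (Suc n))) \<longlonglongrightarrow> F t"
proof -
  have Fi: "F integrable_on cbox a b" for a b
    using integrable_on_lborel[OF F] by (rule integrable_on_subcbox) simp
  obtain N where N: "negligible N"
    "\<And>x e. \<lbrakk>x \<notin> N; 0 < e\<rbrakk> \<Longrightarrow> \<exists>d>0. \<forall>h. 0 < h \<and> h < d \<longrightarrow>
               norm(integral (cbox x (x + h *\<^sub>R One)) F /\<^sub>R h ^ DIM(real) - F x) < e"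
    using integrable_ccontinuous_explicit[OF Fi] by blast
  show ?thesis
  proof (rule that[OF N(1)])
    fix t assume t: "t \<notin> N"
    show "(\<lambda>n. integral {t..t + 1/real (Suc n)} F / (1/real (Suc n))) \<longlonglongrightarrow> F t"
      unfolding lim_sequentially
    proof (intro allI impI)
      fix e :: real assume e: "e > 0"
      obtain d where d: "d > 0" "\<And>h. 0 < h \<and> h < d \<Longrightarrow>
               norm(integral (cbox t (t + h *\<^sub>R One)) F /\<^sub>R h ^ DIM(real) - F t) < e"
        using N(2)[OF t e] by blast
      obtain no where no: "1 / real (Suc no) < d" using d(1) by (rule nat_approx_posE)
      show "\<exists>no. \<forall>n\<ge>no. dist (integral {t..t + 1 / real (Suc n)} F / (1 / real (Suc n))) (F t) < e"
      proof (intro exI allI impI)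
        fix n assume "no \<le> n"
        then have "1 / real (Suc n) \<le> 1 / real (Suc no)" by (simp add: frac_le)
        then have hn: "0 < 1 / real (Suc n) \<and> 1 / real (Suc n) < d" using no by simp
        have "norm (integral (cbox t (t + (1 / real (Suc n)) *\<^sub>R One)) F /\<^sub>R (1 / real (Suc n)) ^ DIM(real) - F t) < e"
          by (rule d(2)[OF hn])
        then show "dist (integral {t..t + 1 / real (Suc n)} F / (1 / real (Suc n))) (F t) < e"
          by (simp add: One_real dist_real_def divide_inverse mult.commute)
      qed
    qed
  qed
qed


definition ggrid :: "nat \<Rightarrow> real \<Rightarrow> real" where
  "ggrid m t = real_of_int \<lfloor>real (Suc m) * t\<rfloor> / real (Suc m)"

definition Rfun :: "(real \<Rightarrow> real) \<Rightarrow> real \<Rightarrow> real" where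
  "Rfun f t = lim (\<lambda>n. lim (\<lambda>m. avg (1 / real (Suc n)) f (ggrid m t)))"

lemma Rfun_meas:
  assumes p: "p > 1"
  shows "(\<lambda>q. Rfun (fst q) (snd q)) \<in> (borel_of_top (weak_Lp_topology p) \<Otimes>\<^sub>M Leb01) \<rightarrow>\<^sub>M borel"
proof -
  let ?P = "borel_of_top (weak_Lp_topology p) \<Otimes>\<^sub>M Leb01"
  have inner: "(\<lambda>q. avg (1 / real (Suc n)) (fst q) (ggrid m (snd q))) \<in> ?P \<rightarrow>\<^sub>M borel" for n m
  proof -
    have fk: "(\<lambda>q. avg (1 / real (Suc n)) (fst q) (real_of_int k / real (Suc m))) \<in> ?P \<rightarrow>\<^sub>M borel" for k :: int
    proof -
      have "(\<lambda>f. avg (1 / real (Suc n)) f (real_of_int k / real (Suc m))) \<in> borel_of_top (weak_Lp_topology p) \<rightarrow>\<^sub>M borel"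
        by (rule avg_meas[OF p]) simp
      then show ?thesis by (rule measurable_compose[OF measurable_fst])
    qed
    have g: "(\<lambda>q. \<lfloor>real (Suc m) * snd q\<rfloor>) \<in> ?P \<rightarrow>\<^sub>M count_space UNIV"
    proof (rule measurable_compose[OF _ measurable_real_floor])
      have "(\<lambda>q. snd q) \<in> ?P \<rightarrow>\<^sub>M borel" by (rule measurable_compose[OF measurable_snd id_Leb01])
      then show "(\<lambda>q. real (Suc m) * snd q) \<in> ?P \<rightarrow>\<^sub>M borel" by measurable
    qed
    have "(\<lambda>q. avg (1 / real (Suc n)) (fst q) (real_of_int \<lfloor>real (Suc m) * snd q\<rfloor> / real (Suc m))) \<in> ?P \<rightarrow>\<^sub>M borel"
      by (rule measurable_compose_countable[OF fk g])
    then show ?thesis unfolding ggrid_def .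
  qed
  show ?thesis unfolding Rfun_def
    by (intro borel_measurable_lim_metric inner)
qed

lemma ggrid_lim: "(\<lambda>m. ggrid m t) \<longlonglongrightarrow> t"
proof (rule tendsto_sandwich[of "\<lambda>m. t - inverse (real (Suc m))" _ _ "\<lambda>m. t"])
  have b: "t - inverse (real (Suc m)) \<le> ggrid m t \<and> ggrid m t \<le> t" for m
  proof -
    define F where "F = real_of_int \<lfloor>real (Suc m) * t\<rfloor>"
    have F1: "F \<le> real (Suc m) * t" unfolding F_def by (rule of_int_floor_le)
    have F2: "real (Suc m) * t - 1 \<le> F" unfolding F_def by linarith
    have "F / real (Suc m) \<le> t"
      using F1 by (subst pos_divide_le_eq) (simp_all add: mult.commute del: of_nat_Suc)
    moreover have "t - inverse (real (Suc m)) \<le> F / real (Suc m)"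
    proof -
      have "(real (Suc m) * t - 1) / real (Suc m) \<le> F / real (Suc m)"
        using F2 by (intro divide_right_mono) auto
      moreover have "(real (Suc m) * t - 1) / real (Suc m) = t - inverse (real (Suc m))"
        by (simp add: field_simps)
      ultimately show ?thesis by simp
    qed
    ultimately show ?thesis unfolding ggrid_def F_def by simp
  qed
  show "eventually (\<lambda>m. t - inverse (real (Suc m)) \<le> ggrid m t) sequentially" using b by simp
  show "eventually (\<lambda>m. ggrid m t \<le> t) sequentially" using b by simp
  show "(\<lambda>m. t - inverse (real (Suc m))) \<longlonglongrightarrow> t"
    using tendsto_diff[OF tendsto_const[of t] LIMSEQ_inverse_real_of_nat] by simp
  show "(\<lambda>m. t) \<longlonglongrightarrow> t" by simp
qed

lemma Rfun_AE:
  assumes p: "p \<ge> 1" and f: "f \<in> Lp01 p"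
  shows "AE t in Leb01. Rfun f t = f t"
proof -
  have fi: "integrable Leb01 f" by (rule Lp_integrable[OF p f])
  have F: "integrable lborel (phit f)" by (rule phit_integrable[OF fi])
  obtain N where N: "negligible N"
    "\<And>t. t \<notin> N \<Longrightarrow> (\<lambda>n. integral {t..t + 1/real (Suc n)} (phit f) / (1/real (Suc n))) \<longlonglongrightarrow> phit f t"
    using lebesgue_diff[OF F] by blast
  have good: "Rfun f t = f t" if t: "t \<in> {0..1}" "t \<notin> N" for t
  proof -
    have inn: "lim (\<lambda>m. avg (1 / real (Suc n)) f (ggrid m t)) = avg (1 / real (Suc n)) f t" for n
    proof -
      have "(\<lambda>m. integral {ggrid m t..ggrid m t + 1 / real (Suc n)} (phit f))
             \<longlonglongrightarrow> integral {t..t + 1 / real (Suc n)} (phit f)"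
        by (rule avg_cont[OF F _ _ t(1) ggrid_lim]) auto
      then have "(\<lambda>m. avg (1 / real (Suc n)) f (ggrid m t)) \<longlonglongrightarrow> avg (1 / real (Suc n)) f t"
        unfolding avg_def divide_inverse by (rule tendsto_mult[OF _ tendsto_const])
      then show ?thesis by (rule limI)
    qed
    have "(\<lambda>n. avg (1 / real (Suc n)) f t) \<longlonglongrightarrow> phit f t"
      using N(2)[OF t(2)] unfolding avg_def .
    moreover have "phit f t = f t" using t unfolding phit_def by simp
    ultimately have "(\<lambda>n. avg (1 / real (Suc n)) f t) \<longlonglongrightarrow> f t" by simp
    then show ?thesis unfolding Rfun_def inn by (rule limI)
  qed
  have "N \<in> null_sets lebesgue" using N(1) by (simp add: negligible_iff_null_sets)
  then have "AE t in lebesgue. t \<notin> N" by (rule AE_not_in)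
  then have "AE t in lborel. t \<notin> N" by (simp add: AE_completion_iff)
  then have "AE t in lborel. t \<in> {0..1} \<longrightarrow> Rfun f t = f t"
    by (rule AE_mp) (auto intro!: AE_I2 good)
  then show ?thesis unfolding Leb01_def by (subst AE_restrict_space_iff) auto
qed


lemma AE_Leb01_ne1: "AE t in Leb01. t \<noteq> 1"
proof -
  have "AE t in lborel. t \<in> {0..1::real} \<longrightarrow> t \<noteq> 1"
    using AE_lborel_singleton[of "1::real"] by (rule AE_mp) (auto intro!: AE_I2)
  then show ?thesis unfolding Leb01_def by (subst AE_restrict_space_iff) auto
qed

lemma s_meas:
  assumes s: "s \<in> cadlag"
  shows "s \<in> Leb01 \<rightarrow>\<^sub>M borel"
proof -
  have S: "(\<lambda>t. Sfun s t) \<in> Leb01 \<rightarrow>\<^sub>M borel"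
  proof -
    have "(\<lambda>t. (s, t)) \<in> Leb01 \<rightarrow>\<^sub>M (borel_of_top skorohod_topology \<Otimes>\<^sub>M Leb01)"
      using s by (intro measurable_Pair measurable_const measurable_ident) auto
    from measurable_compose[OF this Sfun_meas] show ?thesis by simp
  qed
  have m: "(\<lambda>t. if t = 1 then s 1 else Sfun s t) \<in> Leb01 \<rightarrow>\<^sub>M borel"
  proof (rule measurable_If)
    show "(\<lambda>t. s 1) \<in> Leb01 \<rightarrow>\<^sub>M borel" by simp
    show "(\<lambda>t. Sfun s t) \<in> Leb01 \<rightarrow>\<^sub>M borel" by (rule S)
    have "{t \<in> space Leb01. t = 1} = {1}" by auto
    moreover have "{1::real} \<in> sets Leb01"
      unfolding Leb01_def by (subst sets_restrict_space_iff) auto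
    ultimately show "{t \<in> space Leb01. t = 1} \<in> sets Leb01" by simp
  qed
  have eq: "(if t = 1 then s 1 else Sfun s t) = s t" if "t \<in> space Leb01" for t
    using that Sfun_eq[OF s, of t] by auto
  show ?thesis using measurable_cong[THEN iffD1, OF eq m] by simp
qed

theorem lemma6p5:
  fixes \<alpha> \<beta> :: real and H :: "real \<Rightarrow> real"
  assumes "\<alpha> > 1" and "1 < \<beta>" and "\<beta> < \<alpha>"
    and "continuous_on UNIV H"
  shows "(\<lambda>(s, \<phi>). \<integral>t. H (s t) * \<bar>\<phi> t\<bar> powr \<alpha> \<partial>Leb01)
           \<in> borel_of_top (prod_topology skorohod_topology (weak_Lp_topology \<beta>)) \<rightarrow>\<^sub>M borel"
proof -
  note b = assms(2) and Hc = assms(4)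
  let ?D = "borel_of_top skorohod_topology"
  let ?L = "borel_of_top (weak_Lp_topology \<beta>)"
  let ?P = "?D \<Otimes>\<^sub>M ?L"
  have Hm: "H \<in> borel \<rightarrow>\<^sub>M borel" by (rule borel_measurable_continuous_onI[OF Hc])
  have sf: "sigma_finite_measure Leb01"
    using Leb01_finite unfolding finite_measure_def by blast
  have m1: "(\<lambda>x. Sfun (fst (fst x)) (snd x)) \<in> (?P \<Otimes>\<^sub>M Leb01) \<rightarrow>\<^sub>M borel"
  proof -
    have "(\<lambda>x. (fst (fst x), snd x)) \<in> (?P \<Otimes>\<^sub>M Leb01) \<rightarrow>\<^sub>M (?D \<Otimes>\<^sub>M Leb01)"
      by (intro measurable_Pair measurable_compose[OF measurable_fst measurable_fst] measurable_snd)
    from measurable_compose[OF this Sfun_meas] show ?thesis by simp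
  qed
  have m2: "(\<lambda>x. Rfun (snd (fst x)) (snd x)) \<in> (?P \<Otimes>\<^sub>M Leb01) \<rightarrow>\<^sub>M borel"
  proof -
    have "(\<lambda>x. (snd (fst x), snd x)) \<in> (?P \<Otimes>\<^sub>M Leb01) \<rightarrow>\<^sub>M (?L \<Otimes>\<^sub>M Leb01)"
      by (intro measurable_Pair measurable_compose[OF measurable_fst measurable_snd] measurable_snd)
    from measurable_compose[OF this Rfun_meas[OF b]] show ?thesis by simp
  qed
  have K: "(\<lambda>x. H (Sfun (fst (fst x)) (snd x)) * \<bar>Rfun (snd (fst x)) (snd x)\<bar> powr \<alpha>)
      \<in> (?P \<Otimes>\<^sub>M Leb01) \<rightarrow>\<^sub>M borel"
    using measurable_compose[OF m1 Hm] m2 by measurable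
  have F1: "(\<lambda>x. \<integral>t. H (Sfun (fst x) t) * \<bar>Rfun (snd x) t\<bar> powr \<alpha> \<partial>Leb01) \<in> ?P \<rightarrow>\<^sub>M borel"
    by (rule sigma_finite_measure.borel_measurable_lebesgue_integral[OF sf]) (use K in simp)
  have eq: "(\<integral>t. H (Sfun (fst x) t) * \<bar>Rfun (snd x) t\<bar> powr \<alpha> \<partial>Leb01) =
            (case x of (s, \<phi>) \<Rightarrow> \<integral>t. H (s t) * \<bar>\<phi> t\<bar> powr \<alpha> \<partial>Leb01)" if x: "x \<in> space ?P" for x
  proof -
    obtain s \<phi> where x': "x = (s, \<phi>)" by fastforce
    have s: "s \<in> cadlag" and \<phi>: "\<phi> \<in> Lp01 \<beta>" using x unfolding x' by (auto simp: space_pair_measure topspace_weak)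
    have \<phi>m: "\<phi> \<in> Leb01 \<rightarrow>\<^sub>M borel" using \<phi> unfolding Lp01_def by blast
    have Sm: "(\<lambda>t. Sfun s t) \<in> Leb01 \<rightarrow>\<^sub>M borel"
    proof -
      have "(\<lambda>t. (s, t)) \<in> Leb01 \<rightarrow>\<^sub>M (?D \<Otimes>\<^sub>M Leb01)"
        using s by (intro measurable_Pair measurable_const measurable_ident) auto
      from measurable_compose[OF this Sfun_meas] show ?thesis by simp
    qed
    have Rm: "(\<lambda>t. Rfun \<phi> t) \<in> Leb01 \<rightarrow>\<^sub>M borel"
    proof -
      have "(\<lambda>t. (\<phi>, t)) \<in> Leb01 \<rightarrow>\<^sub>M (?L \<Otimes>\<^sub>M Leb01)"
        using \<phi> by (intro measurable_Pair measurable_const measurable_ident) (auto simp: topspace_weak)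
      from measurable_compose[OF this Rfun_meas[OF b]] show ?thesis by simp
    qed
    have sm: "s \<in> Leb01 \<rightarrow>\<^sub>M borel" by (rule s_meas[OF s])
    have i1: "(\<lambda>t. H (Sfun s t) * \<bar>Rfun \<phi> t\<bar> powr \<alpha>) \<in> Leb01 \<rightarrow>\<^sub>M borel"
      using measurable_compose[OF Sm Hm] Rm by measurable
    have i2: "(\<lambda>t. H (s t) * \<bar>\<phi> t\<bar> powr \<alpha>) \<in> Leb01 \<rightarrow>\<^sub>M borel"
      using measurable_compose[OF sm Hm] \<phi>m by measurable
    have ae: "AE t in Leb01. H (Sfun s t) * \<bar>Rfun \<phi> t\<bar> powr \<alpha> = H (s t) * \<bar>\<phi> t\<bar> powr \<alpha>"
    proof -
      have r: "AE t in Leb01. Rfun \<phi> t = \<phi> t" using Rfun_AE[of \<beta> \<phi>] b \<phi> by simp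
      show ?thesis using r AE_Leb01_ne1 AE_space
      proof eventually_elim
        case (elim t)
        then have "t \<in> {0..<1}" by auto
        then show ?case using Sfun_eq[OF s, of t] elim(1) by simp
      qed
    qed
    show ?thesis unfolding x' using integral_cong_AE[OF i1 i2 ae] by simp
  qed
  have F0: "(\<lambda>(s, \<phi>). \<integral>t. H (s t) * \<bar>\<phi> t\<bar> powr \<alpha> \<partial>Leb01) \<in> ?P \<rightarrow>\<^sub>M borel"
    using measurable_cong[THEN iffD1, OF eq F1] by simp
  show ?thesis
  proof (rule measurable_from_smaller[OF F0])
    show "sets ?P \<subseteq> sets (borel_of_top (prod_topology skorohod_topology (weak_Lp_topology \<beta>)))"
      by (rule sets_pair_sub_borel_prod)
    show "space ?P = space (borel_of_top (prod_topology skorohod_topology (weak_Lp_topology \<beta>)))"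
      by (simp add: space_pair_measure topspace_prod_topology topspace_weak)
  qed
qed


end
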